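(* Let $n>1$ be an integer with square-free part $m=\prod_{p\mid n,\ p\text{ prime}}p$. Then $$n\sum_{d_1\mid n}\sum_{d_2\mid n}\mu(d_1)\mu(d_2)\,s\!\left(\frac{n}{d_1},\frac{n}{d_2}\right)=\frac{\phi(n)}{24}\left(2(-1)^{\omega(m)}\phi(m)+2^{\omega(n)}\right).$$
   Context: $\mu$ is the Möbius function, $\phi$ Euler's totient function, $\omega(k)$ the number of distinct prime factors of $k$. For positive integers $b,a$ (no coprimality assumed), $s(b,a)=\sum_{k=1}^{a}\left(\left(\frac{kb}{a}\right)\right)\left(\left(\frac{k}{a}\right)\right)$, where $((x))=\{x\}-\tfrac12$ if $x\notin\mathbb{Z}$ and $((x))=0$ if $x\in\mathbb{Z}$, with $\{x\}$ the fractional part. *)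

theory Defs
  imports "HOL-Number_Theory.Number_Theory" "HOL-Computational_Algebra.Squarefree"
begin

definition mobius_mu :: "nat \<Rightarrow> int" where
  "mobius_mu n = (if n = 0 \<or> \<not> squarefree n then 0 else (-1) ^ card (prime_factors n))"

definition omega :: "nat \<Rightarrow> nat" where
  "omega n = card (prime_factors n)"

definition sawtooth :: "real \<Rightarrow> real" where
  "sawtooth x = (if x \<in> \<int> then 0 else frac x - 1/2)"

text \<open>Dedekind sum s(b,a) for positive integers b, a (no coprimality assumed).\<close>
definition dedekind_sum :: "nat \<Rightarrow> nat \<Rightarrow> real" where
  "dedekind_sum b a = (\<Sum>k=1..a. sawtooth (real (k * b) / real a) * sawtooth (real k / real a))"

end

theory Submission
  imports Defs
begin


lemma saw_div:
  assumes "a > 0"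
  shows "sawtooth (real p / real a) = (if a dvd p then 0 else real (p mod a) / real a - 1/2)"
proof -
  have eq: "real p / real a = real (p div a) + real (p mod a) / real a"
    by (rule of_nat_of_nat_div_aux)
  show ?thesis
  proof (cases "a dvd p")
    case True
    then have "p mod a = 0" by simp
    then have "real p / real a \<in> \<int>" using eq by simp
    then show ?thesis using True by (simp add: sawtooth_def)
  next
    case False
    then have pm: "0 < p mod a" "p mod a < a" using assms by (auto simp: mod_greater_zero_iff_not_dvd)
    have f0: "0 < real (p mod a) / real a" "real (p mod a) / real a < 1" using pm by auto
    have fr: "frac (real p / real a) = real (p mod a) / real a"
      using f0 by (subst eq, subst frac_add_int_left) (auto simp: frac_eq)
    have "real p / real a \<notin> \<int>"
    proof
      assume "real p / real a \<in> \<int>"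
      then have "frac (real p / real a) = 0" by (simp only: frac_eq_0_iff)
      with fr f0 show False by linarith
    qed
    then show ?thesis using False fr by (simp add: sawtooth_def)
  qed
qed



lemma saw_zero [simp]: "sawtooth 0 = 0" and saw_one [simp]: "sawtooth 1 = 0"
  by (auto simp: sawtooth_def)

lemma ds_lessThan:
  assumes "a > 0"
  shows "dedekind_sum b a = (\<Sum>k<a. sawtooth (real (k * b) / real a) * sawtooth (real k / real a))"
proof -
  let ?f = "\<lambda>k. sawtooth (real (k * b) / real a) * sawtooth (real k / real a)"
  have "dedekind_sum b a = sum ?f {1..a}" by (simp add: dedekind_sum_def)
  also have "\<dots> = sum ?f {..a}"
  proof (rule sum.mono_neutral_left)
    have "{..a} - {1..a} = {0}" by auto
    then show "\<forall>i\<in>{..a} - {1..a}. ?f i = 0" by simp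
  qed auto
  also have "\<dots> = sum ?f {..<a} + ?f a" by (simp add: lessThan_Suc_atMost[symmetric])
  also have "?f a = 0" using assms by simp
  finally show ?thesis by simp
qed

lemma sum_group:
  fixes g :: "nat \<Rightarrow> real"
  shows "(\<Sum>k<c*a. g k) = (\<Sum>t<c. \<Sum>r<a. g (t * a + r))"
proof -
  have "(\<Sum>k<c*a. g k) = (\<Sum>t<c. sum g {t*a..<t*a+a})"
    using sum.nat_group[of g a c] by simp
  also have "\<dots> = (\<Sum>t<c. \<Sum>r<a. g (t * a + r))"
  proof (rule sum.cong[OF refl])
    fix t
    show "sum g {t*a..<t*a+a} = (\<Sum>r<a. g (t * a + r))"
      using sum.atLeastLessThan_shift_0[of g "t*a" "t*a+a"] by (simp add: atLeast0LessThan add.commute comp_def)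
  qed
  finally show ?thesis .
qed

lemma gauss_real: "(\<Sum>t<c. real t) = real c * (real c - 1) / 2"
  by (induction c) (auto simp: field_simps)

lemma distrib_saw:
  assumes "a > 0" "c > 0" "r < a"
  shows "(\<Sum>t<c. sawtooth (real (t * a + r) / real (c * a))) = sawtooth (real r / real a)"
proof -
  have ca: "c * a > 0" using assms by simp
  have lt: "t * a + r < c * a" if "t < c" for t
  proof -
    have "Suc t \<le> c" using that by simp
    then have "Suc t * a \<le> c * a" by (rule mult_right_mono) simp
    then show ?thesis using assms(3) by simp
  qed
  show ?thesis
  proof (cases "r = 0")
    case True
    have "(\<Sum>t<c. sawtooth (real (t * a + r) / real (c * a)))
        = (\<Sum>t<c. (if t = 0 then 0 else real t / real c - 1/2))"
    proof (rule sum.cong[OF refl])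
      fix t assume t: "t \<in> {..<c}"
      have "(t * a) mod (c * a) = t * a" using lt[of t] t True by simp
      moreover have "c * a dvd t * a \<longleftrightarrow> t = 0"
        using lt[of t] t True assms by (auto dest: dvd_imp_le)
      ultimately show "sawtooth (real (t * a + r) / real (c * a)) = (if t = 0 then 0 else real t / real c - 1/2)"
        using True saw_div[OF ca, of "t*a"] assms by (simp add: field_simps)
    qed
    also have "\<dots> = (\<Sum>t<c. real t / real c - 1/2) + 1/2"
    proof -
      have "(\<Sum>t<c. real t / real c - 1/2) = (\<Sum>t<c. (if t = 0 then 0 else real t / real c - 1/2)) - 1/2"
        using assms(2) by (subst (1 2) sum.remove[of "{..<c}" 0]) auto
      then show ?thesis by simp
    qed
    also have "\<dots> = 0"
    proof -
      have "(\<Sum>t<c. real t / real c - 1/2) = (\<Sum>t<c. real t) / real c - real c / 2"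
        by (simp add: sum_subtractf sum_divide_distrib[symmetric])
      then show ?thesis using assms(2) by (simp add: gauss_real field_simps)
    qed
    finally show ?thesis using True by simp
  next
    case False
    have "(\<Sum>t<c. sawtooth (real (t * a + r) / real (c * a)))
        = (\<Sum>t<c. (real t / real c + real r / real (c * a) - 1/2))"
    proof (rule sum.cong[OF refl])
      fix t assume t: "t \<in> {..<c}"
      have "(t * a + r) mod (c * a) = t * a + r" using lt[of t] t by simp
      moreover have "\<not> c * a dvd t * a + r"
        using lt[of t] t False by (auto dest: dvd_imp_le)
      ultimately show "sawtooth (real (t * a + r) / real (c * a)) = real t / real c + real r / real (c * a) - 1/2"
        using saw_div[OF ca, of "t*a+r"] assms by (simp add: field_simps)
    qed
    also have "\<dots> = real r / real a - 1/2"
    proof -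
      have "(\<Sum>t<c. (real t / real c + real r / real (c * a) - 1/2)) = (\<Sum>t<c. real t / real c) + (\<Sum>t<c. real r / real (c * a)) - (\<Sum>t<c. 1/2)"
        by (simp only: sum_subtractf sum.distrib)
      also have "\<dots> = (\<Sum>t<c. real t) / real c + real c * (real r / real (c * a)) - real c / 2"
        by (simp add: sum_divide_distrib[symmetric])
      also have "\<dots> = real r / real a - 1/2"
        using assms by (simp add: gauss_real field_simps)
      finally show ?thesis .
    qed
    also have "\<dots> = sawtooth (real r / real a)"
      using saw_div[OF assms(1), of r] False assms(3) by (auto dest: dvd_imp_le)
    finally show ?thesis .
  qed
qed

lemma ds_scale:
  assumes "a > 0" "c > 0"
  shows "dedekind_sum (c * b) (c * a) = dedekind_sum b a"
proof -
  have ca: "c * a > 0" using assms by simp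
  have per: "sawtooth (real ((t * a + r) * (c * b)) / real (c * a)) = sawtooth (real (r * b) / real a)" for t r
  proof -
    have e: "real ((t * a + r) * (c * b)) / real (c * a) = real (t * b) + real (r * b) / real a"
      using assms by (simp add: field_simps)
    have sh: "sawtooth (real m + x) = sawtooth x" for m x
    proof -
      have "(real m + x \<in> \<int>) = (x \<in> \<int>)"
        by (metis Ints_add Ints_diff Ints_of_nat add_diff_cancel_left')
      moreover have "frac (real m + x) = frac x"
        by (metis add.commute frac_add_int_right Ints_of_nat)
      ultimately show ?thesis by (simp add: sawtooth_def)
    qed
    show ?thesis unfolding e by (rule sh)
  qed
  have "dedekind_sum (c * b) (c * a) = (\<Sum>k<c*a. sawtooth (real (k * (c*b)) / real (c*a)) * sawtooth (real k / real (c*a)))"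
    using ds_lessThan[OF ca] .
  also have "\<dots> = (\<Sum>t<c. \<Sum>r<a. sawtooth (real (r * b) / real a) * sawtooth (real (t*a+r) / real (c*a)))"
    by (subst sum_group, simp only: per)
  also have "\<dots> = (\<Sum>r<a. sawtooth (real (r * b) / real a) * (\<Sum>t<c. sawtooth (real (t*a+r) / real (c*a))))"
    by (subst sum.swap) (simp add: sum_distrib_left)
  also have "\<dots> = (\<Sum>r<a. sawtooth (real (r * b) / real a) * sawtooth (real r / real a))"
    using assms by (intro sum.cong refl) (simp only: distrib_saw lessThan_iff)
  also have "\<dots> = dedekind_sum b a" using ds_lessThan[OF assms(1)] by simp
  finally show ?thesis .
qed



lemma perm_sum:
  fixes f :: "nat \<Rightarrow> real"
  assumes "a > 0" "coprime a b"
  shows "(\<Sum>k<a. f ((k * b) mod a)) = (\<Sum>k<a. f k)"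
proof -
  let ?g = "\<lambda>k. (k * b) mod a"
  have inj: "inj_on ?g {..<a}"
  proof
    fix x y assume x: "x \<in> {..<a}" and y: "y \<in> {..<a}" and e: "?g x = ?g y"
    have "[x * b = y * b] (mod a)" using e by (simp add: cong_def)
    then have "[x = y] (mod a)" using assms(2) by (simp add: cong_mult_rcancel_nat coprime_commute)
    then show "x = y" using x y by (simp add: cong_less_modulus_unique_nat)
  qed
  have sub: "?g ` {..<a} \<subseteq> {..<a}" using assms(1) by auto
  have "?g ` {..<a} = {..<a}" by (rule endo_inj_surj[OF _ sub inj]) simp
  then have "bij_betw ?g {..<a} {..<a}" using inj by (simp add: bij_betw_def)
  then show ?thesis by (rule sum.reindex_bij_betw)
qed

lemma gauss_sq: "(\<Sum>k<a. real k ^ 2) = real a * (real a - 1) * (2 * real a - 1) / 6"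
  by (induction a) (auto simp: field_simps power2_eq_square)

lemma ds_coprime:
  assumes "a > 0" "coprime a b"
  shows "dedekind_sum b a = (\<Sum>k<a. (real ((k * b) mod a) / real a - 1/2) * (real k / real a - 1/2)) - 1/4"
proof -
  let ?g = "\<lambda>k. (real ((k * b) mod a) / real a - 1/2) * (real k / real a - 1/2)"
  have "dedekind_sum b a = (\<Sum>k<a. if k = 0 then 0 else ?g k)"
    unfolding ds_lessThan[OF assms(1)]
  proof (rule sum.cong[OF refl])
    fix k assume k: "k \<in> {..<a}"
    have d1: "a dvd k * b \<longleftrightarrow> k = 0"
      using k assms by (auto simp: coprime_dvd_mult_left_iff dest: dvd_imp_le)
    have d2: "a dvd k \<longleftrightarrow> k = 0"
      using k assms by (auto dest: dvd_imp_le)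
    show "sawtooth (real (k * b) / real a) * sawtooth (real k / real a) = (if k = 0 then 0 else ?g k)"
      using k unfolding saw_div[OF assms(1)] d1 d2 by simp
  qed
  also have "\<dots> = sum ?g {..<a} - ?g 0"
  proof -
    have z: "0 \<in> {..<a}" using assms(1) by simp
    have "sum ?g {..<a} = ?g 0 + sum ?g ({..<a} - {0})" by (rule sum.remove[OF _ z]) simp
    moreover have "(\<Sum>k<a. if k = 0 then 0 else ?g k) = 0 + (\<Sum>k\<in>{..<a} - {0}. if k = 0 then 0 else ?g k)"
      using sum.remove[OF _ z, of "\<lambda>k. if k = 0 then 0 else ?g k"] by simp
    moreover have "(\<Sum>k\<in>{..<a} - {0}. if k = 0 then 0 else ?g k) = sum ?g ({..<a} - {0})"
      by (intro sum.cong refl) auto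
    ultimately show ?thesis by simp
  qed
  also have "?g 0 = 1/4" by simp
  finally show ?thesis .
qed

lemma a2_ds:
  assumes "a > 0" "coprime a b"
  shows "real a ^ 2 * dedekind_sum b a = (\<Sum>k<a. real k * real ((k * b) mod a)) - real a ^ 2 * (real a - 1) / 4"
proof -
  have sr: "(\<Sum>k<a. real ((k * b) mod a)) = (\<Sum>k<a. real k)"
    using perm_sum[OF assms, of real] .
  have "real a ^ 2 * (\<Sum>k<a. (real ((k * b) mod a) / real a - 1/2) * (real k / real a - 1/2))
      = (\<Sum>k<a. real k * real ((k * b) mod a) - real a / 2 * real ((k * b) mod a) - real a / 2 * real k + real a ^ 2 / 4)"
    unfolding sum_distrib_left using assms(1)
    by (intro sum.cong refl) (simp add: field_simps power2_eq_square)
  also have "\<dots> = (\<Sum>k<a. real k * real ((k * b) mod a)) - real a / 2 * (\<Sum>k<a. real ((k * b) mod a))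
       - real a / 2 * (\<Sum>k<a. real k) + real a * real a ^ 2 / 4"
    by (simp add: sum.distrib sum_subtractf sum_distrib_left)
  also have "\<dots> = (\<Sum>k<a. real k * real ((k * b) mod a)) - real a ^ 2 * (real a - 1) / 4 + real a ^ 2 / 4"
    unfolding sr gauss_real by (simp add: field_simps power2_eq_square)
  finally show ?thesis unfolding ds_coprime[OF assms] by (simp add: algebra_simps)
qed

lemma split_mod:
  assumes "a > 0"
  shows "real ((k * b) mod a) = real k * real b - real a * real ((k * b) div a)"
proof -
  have "k * b = a * ((k * b) div a) + (k * b) mod a" by simp
  then have "real (k * b) = real a * real ((k * b) div a) + real ((k * b) mod a)"
    by (metis of_nat_add of_nat_mult)
  then show ?thesis by simp
qed

lemma tail_sum:
  assumes "p < a"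
  shows "(\<Sum>k<a. if p < k then real k else 0) = real a * (real a - 1) / 2 - real p * (real p + 1) / 2"
proof -
  have "(\<Sum>k<a. real k) = (\<Sum>k<a. (if p < k then real k else 0) + (if k \<le> p then real k else 0))"
    by (intro sum.cong refl) auto
  also have "\<dots> = (\<Sum>k<a. if p < k then real k else 0) + (\<Sum>k<a. if k \<le> p then real k else 0)"
    by (rule sum.distrib)
  also have "(\<Sum>k<a. if k \<le> p then real k else 0) = (\<Sum>k<Suc p. real k)"
    using assms by (intro sum.mono_neutral_cong_right) auto
  finally show ?thesis unfolding gauss_real by (simp add: field_simps)
qed

lemma count_identity:
  assumes "a > 0" "b > 0" "coprime a b"
  shows "2 * (\<Sum>k<a. real k * real ((k * b) div a))
         + (\<Sum>j<b. real ((j * a) div b) ^ 2) + (\<Sum>j<b. real ((j * a) div b))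
         = (real b - 1) * real a * (real a - 1)"
proof -
  have q: "real ((k * b) div a) = (\<Sum>j\<in>{1..<b}. if j * a \<le> k * b then 1 else 0)" if k: "k < a" for k
  proof -
    have lt: "(k * b) div a < b"
      using k assms by (simp add: div_less_iff_less_mult mult.commute)
    have iff: "x * a \<le> k * b \<longleftrightarrow> x \<le> (k * b) div a" for x
      using less_eq_div_iff_mult_less_eq[OF assms(1)] by simp
    have "{j\<in>{1..<b}. j * a \<le> k * b} = {1..(k * b) div a}"
      using lt unfolding iff by auto
    then have "card {j\<in>{1..<b}. j * a \<le> k * b} = (k * b) div a" by simp
    moreover have "{1..<b} \<inter> {j. j * a \<le> k * b} = {j\<in>{1..<b}. j * a \<le> k * b}" by auto
    ultimately show ?thesis by (simp add: sum.If_cases)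
  qed
  have inner: "(\<Sum>k<a. if j * a \<le> k * b then real k else 0)
      = real a * (real a - 1) / 2 - real ((j * a) div b) * (real ((j * a) div b) + 1) / 2"
    if j: "j \<in> {1..<b}" for j
  proof -
    have "(\<Sum>k<a. if j * a \<le> k * b then real k else 0) = (\<Sum>k<a. if (j * a) div b < k then real k else 0)"
    proof (rule sum.cong[OF refl])
      fix k
      have ne: "j * a \<noteq> k * b"
      proof
        assume "j * a = k * b"
        then have "b dvd j * a" by simp
        then have "b dvd j" using assms(3) by (simp add: coprime_dvd_mult_left_iff coprime_commute)
        then show False using j by (auto dest: dvd_imp_le)
      qed
      have "j * a \<le> k * b \<longleftrightarrow> j * a < k * b" using ne by auto
      also have "\<dots> \<longleftrightarrow> (j * a) div b < k" using assms(2) by (simp add: div_less_iff_less_mult)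
      finally show "(if j * a \<le> k * b then real k else 0) = (if (j * a) div b < k then real k else 0)" by simp
    qed
    also have "\<dots> = real a * (real a - 1) / 2 - real ((j * a) div b) * (real ((j * a) div b) + 1) / 2"
    proof (rule tail_sum)
      show "(j * a) div b < a" using j assms by (simp add: div_less_iff_less_mult)
    qed
    finally show ?thesis .
  qed
  have "(\<Sum>k<a. real k * real ((k * b) div a)) = (\<Sum>k<a. \<Sum>j\<in>{1..<b}. if j * a \<le> k * b then real k else 0)"
    by (intro sum.cong refl) (simp add: q sum_distrib_left if_distrib cong: if_cong)
  also have "\<dots> = (\<Sum>j\<in>{1..<b}. \<Sum>k<a. if j * a \<le> k * b then real k else 0)"
    by (rule sum.swap)
  also have "\<dots> = (\<Sum>j\<in>{1..<b}. real a * (real a - 1) / 2 - real ((j * a) div b) * (real ((j * a) div b) + 1) / 2)"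
    by (intro sum.cong refl inner) 
  also have "\<dots> = (\<Sum>j<b. real a * (real a - 1) / 2 - real ((j * a) div b) * (real ((j * a) div b) + 1) / 2) - real a * (real a - 1) / 2"
  proof -
    have "{..<b} = insert 0 {1..<b}" using assms(2) by auto
    then show ?thesis by simp
  qed
  also have "\<dots> = real b * (real a * (real a - 1) / 2) - (\<Sum>j<b. real ((j * a) div b) ^ 2) / 2 - (\<Sum>j<b. real ((j * a) div b)) / 2 - real a * (real a - 1) / 2"
    by (simp add: sum_subtractf sum.distrib sum_divide_distrib[symmetric] power2_eq_square algebra_simps) (simp add: field_simps)
  finally show ?thesis by (simp add: field_simps)
qed



lemma t1: fixes a b A :: real assumes "a>0" "b>0" shows "((b*((a*(a-1)*(2*a-1))/6) - a*A)/a^2 - (a-1)/4) + ((a*(b*(b-1)*(2*b-1)/6) - b*((a^2*(b*(b-1)*(2*b-1)/6) + b^2*((b-1)*a*(a-1) - 2*A - (a-1)*(b-1)/2) - b*(b-1)*(2*b-1)/6)/(2*a*b)))/b^2 - (b-1)/4) = (a^2+b^2+1)/(12*a*b) - 1/4"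
proof -
  have "a \<noteq> 0" "b \<noteq> 0" using assms by auto
  then show ?thesis
    by (simp add: divide_simps) (simp add: algebra_simps power2_eq_square power3_eq_cube power4_eq_xxxx)
qed

lemma recip:
  assumes "a > 0" "b > 0" "coprime a b"
  shows "dedekind_sum b a + dedekind_sum a b
         = (real a ^ 2 + real b ^ 2 + 1) / (12 * real a * real b) - 1/4"
proof -
  have cba: "coprime b a" using assms(3) by (simp add: coprime_commute)
  define A where "A = (\<Sum>k<a. real k * real ((k * b) div a))"
  define B where "B = (\<Sum>j<b. real j * real ((j * a) div b))"
  define P2 where "P2 = (\<Sum>j<b. real ((j * a) div b) ^ 2)"
  define P1 where "P1 = (\<Sum>j<b. real ((j * a) div b))"
  define s1 where "s1 = dedekind_sum b a"
  define s2 where "s2 = dedekind_sum a b"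
  have E1: "real a ^ 2 * s1 = real b * (real a * (real a - 1) * (2 * real a - 1) / 6) - real a * A - real a ^ 2 * (real a - 1) / 4"
  proof -
    have "(\<Sum>k<a. real k * real ((k * b) mod a)) = (\<Sum>k<a. real b * real k ^ 2 - real a * (real k * real ((k * b) div a)))"
      using assms(1) by (intro sum.cong refl) (simp add: split_mod algebra_simps power2_eq_square)
    also have "\<dots> = real b * (\<Sum>k<a. real k ^ 2) - real a * A"
      by (simp add: A_def sum_subtractf sum_distrib_left)
    finally show ?thesis unfolding s1_def a2_ds[OF assms(1,3)] gauss_sq by simp
  qed
  have E2: "real b ^ 2 * s2 = real a * (real b * (real b - 1) * (2 * real b - 1) / 6) - real b * B - real b ^ 2 * (real b - 1) / 4"
  proof -
    have "(\<Sum>k<b. real k * real ((k * a) mod b)) = (\<Sum>k<b. real a * real k ^ 2 - real b * (real k * real ((k * a) div b)))"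
      using assms(2) by (intro sum.cong refl) (simp add: split_mod algebra_simps power2_eq_square)
    also have "\<dots> = real a * (\<Sum>k<b. real k ^ 2) - real b * B"
      by (simp add: B_def sum_subtractf sum_distrib_left)
    finally show ?thesis unfolding s2_def a2_ds[OF assms(2) cba] gauss_sq by simp
  qed
  have E3: "2 * A + P2 + P1 = (real b - 1) * real a * (real a - 1)"
    using count_identity[OF assms] unfolding A_def P1_def P2_def .
  have E4: "real a ^ 2 * (real b * (real b - 1) * (2 * real b - 1) / 6) - 2 * real a * real b * B + real b ^ 2 * P2
      = real b * (real b - 1) * (2 * real b - 1) / 6"
  proof -
    have "(\<Sum>j<b. real ((j * a) mod b) ^ 2) = (\<Sum>j<b. real j ^ 2)"
      using perm_sum[OF assms(2) cba, of "\<lambda>x. real x ^ 2"] .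
    moreover have "(\<Sum>j<b. real ((j * a) mod b) ^ 2)
       = (\<Sum>j<b. real a ^ 2 * real j ^ 2 - 2 * real a * real b * (real j * real ((j * a) div b)) + real b ^ 2 * real ((j * a) div b) ^ 2)"
      using assms(2) by (intro sum.cong refl) (simp add: split_mod power2_eq_square algebra_simps)
    moreover have "\<dots> = real a ^ 2 * (\<Sum>j<b. real j ^ 2) - 2 * real a * real b * B + real b ^ 2 * P2"
      by (simp add: B_def P2_def sum.distrib sum_subtractf sum_distrib_left)
    ultimately show ?thesis unfolding gauss_sq by simp
  qed
  have E5: "2 * P1 = (real a - 1) * (real b - 1)"
  proof -
    have "(\<Sum>j<b. real ((j * a) mod b)) = (\<Sum>j<b. real j)"
      using perm_sum[OF assms(2) cba, of real] .
    moreover have "(\<Sum>j<b. real ((j * a) mod b)) = (\<Sum>j<b. real a * real j - real b * real ((j * a) div b))"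
      using assms(2) by (intro sum.cong refl) (simp add: split_mod algebra_simps)
    moreover have "\<dots> = real a * (\<Sum>j<b. real j) - real b * P1"
      by (simp add: P1_def sum_subtractf sum_distrib_left)
    ultimately have "real a * (real b * (real b - 1) / 2) - real b * P1 = real b * (real b - 1) / 2"
      unfolding gauss_real by simp
    then have "real b * (2 * P1) = real b * ((real a - 1) * (real b - 1))"
      by (simp add: field_simps)
    then show ?thesis using assms(2) by simp
  qed
  have ra: "real a > 0" and rb: "real b > 0" using assms by auto
  have s1v: "s1 = (real b * (real a * (real a - 1) * (2 * real a - 1) / 6) - real a * A) / real a ^ 2 - (real a - 1) / 4"
    using E1 ra by (simp add: field_simps)
  have s2v: "s2 = (real a * (real b * (real b - 1) * (2 * real b - 1) / 6) - real b * B) / real b ^ 2 - (real b - 1) / 4"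
    using E2 rb by (simp add: field_simps)
  have P2v: "P2 = (real b - 1) * real a * (real a - 1) - 2 * A - (real a - 1) * (real b - 1) / 2"
    using E3 E5 by simp
  have Bv: "B = (real a ^ 2 * (real b * (real b - 1) * (2 * real b - 1) / 6) + real b ^ 2 * P2 - real b * (real b - 1) * (2 * real b - 1) / 6) / (2 * real a * real b)"
    using E4 ra rb by (simp add: field_simps)
  show ?thesis
    unfolding s1_def[symmetric] s2_def[symmetric] s1v s2v Bv P2v
    by (rule t1[OF ra rb])
qed

lemma recip_scaled:
  assumes "a > 0" "b > 0" "c > 0" "coprime a b"
  shows "dedekind_sum (c * b) (c * a) + dedekind_sum (c * a) (c * b)
         = (real a ^ 2 + real b ^ 2 + 1) / (12 * real a * real b) - 1/4"
  using recip[OF assms(1,2,4)] ds_scale[OF assms(1,3)] ds_scale[OF assms(2,3)] by simp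



lemma pf_prod:
  fixes P :: "nat set"
  assumes "finite P" "\<And>p. p \<in> P \<Longrightarrow> prime p"
  shows "prime_factors (\<Prod>P) = P"
proof -
  have "prime_factorization (\<Prod>P) = (\<Sum>p\<in>P. prime_factorization p)"
    using assms by (intro prime_factorization_prod) (auto dest: prime_gt_0_nat)
  also have "\<dots> = (\<Sum>p\<in>P. {#p#})"
    using assms by (intro sum.cong refl) (simp add: prime_factorization_prime)
  also have "\<dots> = mset_set P" using assms(1)
    by (induction P rule: finite_induct) auto
  finally show ?thesis using assms(1) by simp
qed

lemma prod_primes_pos:
  fixes P :: "nat set"
  assumes "\<And>p. p \<in> P \<Longrightarrow> prime p"
  shows "\<Prod>P > 0"
  using assms by (intro prod_pos) (auto dest: prime_gt_0_nat)

lemma squarefree_prod_primes: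
  fixes P :: "nat set"
  assumes "\<And>p. p \<in> P \<Longrightarrow> prime p"
  shows "squarefree (\<Prod>P)"
  using assms by (intro squarefree_prod_coprime) (auto intro: primes_coprime squarefree_prime)

lemma mu_prod:
  fixes P :: "nat set"
  assumes "finite P" "\<And>p. p \<in> P \<Longrightarrow> prime p"
  shows "mobius_mu (\<Prod>P) = (-1) ^ card P"
  using prod_primes_pos[OF assms(2)] squarefree_prod_primes[OF assms(2)] pf_prod[OF assms]
  by (simp add: mobius_mu_def)

lemma squarefree_eq_prod:
  fixes d :: nat
  assumes "d > 0" "squarefree d"
  shows "\<Prod>(prime_factors d) = d"
proof -
  have "d = (\<Prod>p\<in>prime_factors d. p ^ multiplicity p d)"
    using assms(1) by (rule prime_factorization_nat)
  also have "\<dots> = (\<Prod>p\<in>prime_factors d. p)"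
    using assms squarefree_factorial_semiring'[of d] by (intro prod.cong refl) simp
  finally show ?thesis by simp
qed

lemma prod_pf_dvd:
  fixes n :: nat
  assumes "n > 0" "P \<subseteq> prime_factors n"
  shows "\<Prod>P dvd n"
proof -
  have "\<Prod>P dvd \<Prod>(prime_factors n)" using assms(2) by (intro prod_dvd_prod_subset) auto
  also have "\<Prod>(prime_factors n) dvd (\<Prod>p\<in>prime_factors n. p ^ multiplicity p n)"
    by (intro prod_dvd_prod) (auto simp: prime_factors_multiplicity intro: dvd_power)
  also have "\<dots> = n" using assms(1) by (rule prime_factorization_nat[symmetric])
  finally show ?thesis .
qed

lemma sum_divisors_mu:
  fixes n :: nat and G :: "nat \<Rightarrow> real"
  assumes "n > 0"
  shows "(\<Sum>d | d dvd n. real_of_int (mobius_mu d) * G d)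
       = (\<Sum>P\<in>Pow (prime_factors n). (-1) ^ card P * G (\<Prod>P))"
proof -
  let ?S = "prime_factors n"
  have pfP: "prime_factors (\<Prod>P) = P" if "P \<in> Pow ?S" for P
    using that by (intro pf_prod) (auto intro: finite_subset in_prime_factors_imp_prime)
  have muP: "mobius_mu (\<Prod>P) = (-1) ^ card P" if "P \<in> Pow ?S" for P
    using that by (intro mu_prod) (auto intro: finite_subset in_prime_factors_imp_prime)
  have inj: "inj_on Prod (Pow ?S)"
  proof
    fix P Q assume "P \<in> Pow ?S" "Q \<in> Pow ?S" "\<Prod>P = \<Prod>Q"
    then show "P = Q" using pfP[of P] pfP[of Q] by metis
  qed
  have sub: "Prod ` Pow ?S \<subseteq> {d. d dvd n}"
    using prod_pf_dvd[OF assms] by auto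
  have "(\<Sum>d | d dvd n. real_of_int (mobius_mu d) * G d) = (\<Sum>d\<in>Prod ` Pow ?S. real_of_int (mobius_mu d) * G d)"
  proof (rule sum.mono_neutral_right)
    show "finite {d. d dvd n}" using assms by simp
    show "Prod ` Pow ?S \<subseteq> {d. d dvd n}" by (rule sub)
    show "\<forall>d\<in>{d. d dvd n} - Prod ` Pow ?S. real_of_int (mobius_mu d) * G d = 0"
    proof
      fix d assume d: "d \<in> {d. d dvd n} - Prod ` Pow ?S"
      have "mobius_mu d = 0"
      proof (rule ccontr)
        assume "mobius_mu d \<noteq> 0"
        then have sq: "squarefree d" and dpos: "d > 0" by (auto simp: mobius_mu_def split: if_splits)
        have "prime_factors d \<subseteq> ?S" using d assms by (intro dvd_prime_factors) auto
        then have "\<Prod>(prime_factors d) \<in> Prod ` Pow ?S" by auto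
        then show False using d squarefree_eq_prod[OF dpos sq] by simp
      qed
      then show "real_of_int (mobius_mu d) * G d = 0" by simp
    qed
  qed
  also have "\<dots> = (\<Sum>P\<in>Pow ?S. real_of_int (mobius_mu (\<Prod>P)) * G (\<Prod>P))"
    by (rule sum.reindex[OF inj, unfolded comp_def])
  also have "\<dots> = (\<Sum>P\<in>Pow ?S. (-1) ^ card P * G (\<Prod>P))"
    by (intro sum.cong refl) (simp add: muP)
  finally show ?thesis .
qed

lemma pow_prod_bool:
  fixes f :: "'a \<Rightarrow> bool \<Rightarrow> real"
  assumes "finite S"
  shows "(\<Sum>P\<in>Pow S. \<Prod>p\<in>S. f p (p \<in> P)) = (\<Prod>p\<in>S. f p True + f p False)"
proof -
  have "(\<Prod>p\<in>S. f p True + f p False) = (\<Sum>X\<in>Pow S. (\<Prod>p\<in>X. f p True) * (\<Prod>p\<in>S - X. f p False))"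
    by (rule prod_add[OF assms])
  also have "\<dots> = (\<Sum>P\<in>Pow S. \<Prod>p\<in>S. f p (p \<in> P))"
  proof (rule sum.cong[OF refl])
    fix X assume X: "X \<in> Pow S"
    have "(\<Prod>p\<in>S. f p (p \<in> X)) = (\<Prod>p\<in>S. if p \<in> X then f p True else f p False)"
      by (intro prod.cong refl) auto
    also have "\<dots> = (\<Prod>p\<in>S \<inter> {p. p \<in> X}. f p True) * (\<Prod>p\<in>S \<inter> - {p. p \<in> X}. f p False)"
      by (rule prod.If_cases[OF assms])
    also have "S \<inter> {p. p \<in> X} = X" using X by auto
    also have "S \<inter> - {p. p \<in> X} = S - X" by auto
    finally show "(\<Prod>p\<in>X. f p True) * (\<Prod>p\<in>S - X. f p False) = (\<Prod>p\<in>S. f p (p \<in> X))" by simp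
  qed
  finally show ?thesis by simp
qed

lemma pow_prod_bool2:
  fixes w :: "'a \<Rightarrow> bool \<Rightarrow> bool \<Rightarrow> real"
  assumes "finite S"
  shows "(\<Sum>P\<in>Pow S. \<Sum>Q\<in>Pow S. \<Prod>p\<in>S. w p (p \<in> P) (p \<in> Q))
       = (\<Prod>p\<in>S. w p True True + w p True False + w p False True + w p False False)"
proof -
  have "(\<Sum>P\<in>Pow S. \<Sum>Q\<in>Pow S. \<Prod>p\<in>S. w p (p \<in> P) (p \<in> Q))
      = (\<Sum>P\<in>Pow S. \<Prod>p\<in>S. w p (p \<in> P) True + w p (p \<in> P) False)"
  proof (rule sum.cong[OF refl])
    fix P
    show "(\<Sum>Q\<in>Pow S. \<Prod>p\<in>S. w p (p \<in> P) (p \<in> Q)) = (\<Prod>p\<in>S. w p (p \<in> P) True + w p (p \<in> P) False)"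
      by (rule pow_prod_bool[OF assms, of "\<lambda>p y. w p (p \<in> P) y"])
  qed
  also have "\<dots> = (\<Prod>p\<in>S. (w p True True + w p True False) + (w p False True + w p False False))"
    by (rule pow_prod_bool[OF assms, of "\<lambda>p x. w p x True + w p x False"])
  finally show ?thesis by (simp add: add.assoc)
qed

lemma sign_prod:
  assumes "finite S" "P \<subseteq> S"
  shows "((-1::real) ^ card P) = (\<Prod>p\<in>S. if p \<in> P then -1 else 1)"
proof -
  have "(\<Prod>p\<in>S. if p \<in> P then (-1::real) else 1) = (\<Prod>p\<in>S \<inter> {p. p \<in> P}. -1) * (\<Prod>p\<in>S \<inter> - {p. p \<in> P}. 1)"
    by (rule prod.If_cases[OF assms(1)])
  also have "S \<inter> {p. p \<in> P} = P" using assms by auto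
  finally show ?thesis by simp
qed

lemma real_prod_sub:
  fixes S :: "nat set"
  assumes "finite S" "P \<subseteq> S"
  shows "real (\<Prod>P) = (\<Prod>p\<in>S. if p \<in> P then real p else 1)"
proof -
  have "(\<Prod>p\<in>S. if p \<in> P then real p else 1) = (\<Prod>p\<in>S \<inter> {p. p \<in> P}. real p) * (\<Prod>p\<in>S \<inter> - {p. p \<in> P}. 1)"
    by (rule prod.If_cases[OF assms(1)])
  also have "S \<inter> {p. p \<in> P} = P" using assms by auto
  finally show ?thesis by simp
qed



lemma pair_value:
  fixes n :: nat
  assumes "n > 0" "P \<subseteq> prime_factors n" "Q \<subseteq> prime_factors n"
  shows "dedekind_sum (n div \<Prod>P) (n div \<Prod>Q) + dedekind_sum (n div \<Prod>Q) (n div \<Prod>P)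
       = (real (\<Prod>(P - Q)) ^ 2 + real (\<Prod>(Q - P)) ^ 2 + 1) / (12 * real (\<Prod>(P - Q)) * real (\<Prod>(Q - P))) - 1/4"
proof -
  have finS: "finite (prime_factors n)" by simp
  have fP: "finite P" and fQ: "finite Q" using assms finite_subset finS by auto
  have prP: "prime p" if "p \<in> P \<union> Q" for p using that assms by (auto intro: in_prime_factors_imp_prime)
  let ?a = "\<Prod>(P - Q)" and ?b = "\<Prod>(Q - P)"
  have apos: "?a > 0" and bpos: "?b > 0" and Ppos: "\<Prod>P > 0" and Qpos: "\<Prod>Q > 0"
    using prP by (auto intro!: prod_primes_pos)
  have dv: "\<Prod>(P \<union> Q) dvd n" using assms by (intro prod_pf_dvd) auto
  then obtain t where nt: "n = \<Prod>(P \<union> Q) * t" by (elim dvdE)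
  have tpos: "t > 0" using nt assms(1) by (cases "t = 0") auto
  have u1: "\<Prod>(P \<union> Q) = \<Prod>P * ?b"
  proof -
    have e: "P \<union> Q = P \<union> (Q - P)" by auto
    show ?thesis by (subst e, rule prod.union_disjoint) (use fP fQ in auto)
  qed
  have u2: "\<Prod>(P \<union> Q) = \<Prod>Q * ?a"
  proof -
    have e: "P \<union> Q = Q \<union> (P - Q)" by auto
    show ?thesis by (subst e, rule prod.union_disjoint) (use fP fQ in auto)
  qed
  have d1: "n div \<Prod>P = t * ?b" using nt u1 Ppos by simp
  have d2: "n div \<Prod>Q = t * ?a" using nt u2 Qpos by simp
  have cop: "coprime ?a ?b"
  proof (rule prod_coprime_left)
    fix i assume i: "i \<in> P - Q"
    show "coprime i ?b"
    proof (rule prod_coprime_right)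
      fix j assume j: "j \<in> Q - P"
      show "coprime i j" using i j prP by (intro primes_coprime) auto
    qed
  qed
  show ?thesis unfolding d1 d2
    using recip_scaled[OF apos bpos tpos cop] by simp
qed



definition sg :: "bool \<Rightarrow> real" where "sg x = (if x then -1 else 1)"
definition fx :: "nat \<Rightarrow> bool \<Rightarrow> bool \<Rightarrow> real" where "fx p x y = (if x \<and> \<not> y then real p else 1)"

lemma fx_pos: "p > 0 \<Longrightarrow> fx p x y > 0" by (simp add: fx_def)

lemma term_prod:
  fixes S :: "nat set"
  assumes "finite S" "P \<subseteq> S" "Q \<subseteq> S" "\<And>p. p \<in> S \<Longrightarrow> p > 0"
  shows "(-1) ^ card P * ((-1) ^ card Q *
          ((real (\<Prod>(P - Q)) ^ 2 + real (\<Prod>(Q - P)) ^ 2 + 1) / (12 * real (\<Prod>(P - Q)) * real (\<Prod>(Q - P))) - 1/4))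
       = (\<Prod>p\<in>S. sg (p\<in>P) * sg (p\<in>Q) * (fx p (p\<in>P) (p\<in>Q) / fx p (p\<in>Q) (p\<in>P))) / 12
         + (\<Prod>p\<in>S. sg (p\<in>P) * sg (p\<in>Q) * (fx p (p\<in>Q) (p\<in>P) / fx p (p\<in>P) (p\<in>Q))) / 12
         + (\<Prod>p\<in>S. sg (p\<in>P) * sg (p\<in>Q) / (fx p (p\<in>P) (p\<in>Q) * fx p (p\<in>Q) (p\<in>P))) / 12
         - (\<Prod>p\<in>S. sg (p\<in>P) * sg (p\<in>Q)) / 4"
proof -
  define a where "a = real (\<Prod>(P - Q))"
  define b where "b = real (\<Prod>(Q - P))"
  define sP where "sP = (-1::real) ^ card P"
  define sQ where "sQ = (-1::real) ^ card Q"
  have PQ: "P - Q \<subseteq> S" and QP: "Q - P \<subseteq> S" using assms by auto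
  have aP: "a = (\<Prod>p\<in>S. fx p (p\<in>P) (p\<in>Q))"
    unfolding a_def using real_prod_sub[OF assms(1) PQ] by (simp add: fx_def)
  have bP: "b = (\<Prod>p\<in>S. fx p (p\<in>Q) (p\<in>P))"
    unfolding b_def using real_prod_sub[OF assms(1) QP] by (simp add: fx_def)
  have sPP: "sP = (\<Prod>p\<in>S. sg (p\<in>P))"
    unfolding sP_def sign_prod[OF assms(1,2)] by (simp add: sg_def)
  have sQP: "sQ = (\<Prod>p\<in>S. sg (p\<in>Q))"
    unfolding sQ_def sign_prod[OF assms(1,3)] by (simp add: sg_def)
  have apos: "a > 0" unfolding aP using assms by (intro prod_pos fx_pos) auto
  have bpos: "b > 0" unfolding bP using assms by (intro prod_pos fx_pos) auto
  have "sP * (sQ * ((a ^ 2 + b ^ 2 + 1) / (12 * a * b) - 1/4))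
      = (sP * sQ * (a / b)) / 12 + (sP * sQ * (b / a)) / 12 + (sP * sQ / (a * b)) / 12 - (sP * sQ) / 4"
    using apos bpos by (simp add: field_simps power2_eq_square)
  also have "sP * sQ * (a / b) = (\<Prod>p\<in>S. sg (p\<in>P) * sg (p\<in>Q) * (fx p (p\<in>P) (p\<in>Q) / fx p (p\<in>Q) (p\<in>P)))"
    unfolding sPP sQP aP bP by (simp add: prod.distrib prod_dividef)
  also have "sP * sQ * (b / a) = (\<Prod>p\<in>S. sg (p\<in>P) * sg (p\<in>Q) * (fx p (p\<in>Q) (p\<in>P) / fx p (p\<in>P) (p\<in>Q)))"
    unfolding sPP sQP aP bP by (simp add: prod.distrib prod_dividef)
  also have "sP * sQ / (a * b) = (\<Prod>p\<in>S. sg (p\<in>P) * sg (p\<in>Q) / (fx p (p\<in>P) (p\<in>Q) * fx p (p\<in>Q) (p\<in>P)))"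
    unfolding sPP sQP aP bP by (simp add: prod.distrib prod_dividef)
  also have "sP * sQ = (\<Prod>p\<in>S. sg (p\<in>P) * sg (p\<in>Q))"
    unfolding sPP sQP by (simp add: prod.distrib)
  finally show ?thesis unfolding a_def b_def sP_def sQ_def .
qed



theorem mainTheorem11:
  fixes n :: nat
  assumes "n > 1"
  defines "m \<equiv> \<Prod>(prime_factors n)"
  shows "real n * (\<Sum>d1 | d1 dvd n. \<Sum>d2 | d2 dvd n.
            real_of_int (mobius_mu d1 * mobius_mu d2) * dedekind_sum (n div d1) (n div d2))
         = real (totient n) / 24 *
           (2 * (-1) ^ omega m * real (totient m) + 2 ^ omega n)"
proof -
  have n0: "n > 0" using assms(1) by simp
  define S where "S = prime_factors n"
  have finS: "finite S" unfolding S_def by simp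
  have Sne: "S \<noteq> {}"
  proof
    assume "S = {}"
    then have "prime_factorization n = {#}" unfolding S_def by simp
    then have "n = 0 \<or> is_unit n" by (simp only: prime_factorization_empty_iff)
    then show False using assms(1) by auto
  qed
  have Spos: "\<And>p. p \<in> S \<Longrightarrow> p > 0" unfolding S_def by (auto intro: prime_gt_0_nat in_prime_factors_imp_prime)
  have Sprime: "\<And>p. p \<in> S \<Longrightarrow> prime p" unfolding S_def by (auto intro: in_prime_factors_imp_prime)
  define D where "D = (\<lambda>d1 d2. dedekind_sum (n div d1) (n div d2))"
  define L where "L = (\<Sum>d1 | d1 dvd n. \<Sum>d2 | d2 dvd n.
            real_of_int (mobius_mu d1 * mobius_mu d2) * dedekind_sum (n div d1) (n div d2))"
  have L1: "L = (\<Sum>P\<in>Pow S. \<Sum>Q\<in>Pow S. (-1) ^ card P * ((-1) ^ card Q * D (\<Prod>P) (\<Prod>Q)))"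
  proof -
    have "L = (\<Sum>d1 | d1 dvd n. real_of_int (mobius_mu d1) * (\<Sum>d2 | d2 dvd n. real_of_int (mobius_mu d2) * D d1 d2))"
      unfolding L_def D_def by (simp add: sum_distrib_left mult.assoc)
    also have "\<dots> = (\<Sum>P\<in>Pow S. (-1) ^ card P * (\<Sum>d2 | d2 dvd n. real_of_int (mobius_mu d2) * D (\<Prod>P) d2))"
      unfolding S_def by (rule sum_divisors_mu[OF n0])
    also have "\<dots> = (\<Sum>P\<in>Pow S. (-1) ^ card P * (\<Sum>Q\<in>Pow S. (-1) ^ card Q * D (\<Prod>P) (\<Prod>Q)))"
      unfolding S_def by (intro sum.cong refl arg_cong2[where f = "(*)"] sum_divisors_mu[OF n0])
    finally show ?thesis by (simp add: sum_distrib_left)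
  qed
  have L2: "L = (\<Sum>P\<in>Pow S. \<Sum>Q\<in>Pow S. (-1) ^ card P * ((-1) ^ card Q * D (\<Prod>Q) (\<Prod>P)))"
    unfolding L1 by (subst sum.swap) (simp add: algebra_simps)
  define w1 where "w1 = (\<lambda>p x y. sg x * sg y * (fx p x y / fx p y x))"
  define w2 where "w2 = (\<lambda>p x y. sg x * sg y * (fx p y x / fx p x y))"
  define w3 where "w3 = (\<lambda>p x y. sg x * sg y / (fx p x y * fx p y x))"
  define w0 where "w0 = (\<lambda>(p::nat) x y. sg x * sg y)"
  have "2 * L = (\<Sum>P\<in>Pow S. \<Sum>Q\<in>Pow S. (-1) ^ card P * ((-1) ^ card Q * (D (\<Prod>P) (\<Prod>Q) + D (\<Prod>Q) (\<Prod>P))))"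
    by (subst (1) mult_2, subst (1) L1, subst (1) L2) (simp add: sum.distrib[symmetric] algebra_simps)
  also have "\<dots> = (\<Sum>P\<in>Pow S. \<Sum>Q\<in>Pow S.
       (\<Prod>p\<in>S. w1 p (p\<in>P) (p\<in>Q)) / 12 + (\<Prod>p\<in>S. w2 p (p\<in>P) (p\<in>Q)) / 12
     + (\<Prod>p\<in>S. w3 p (p\<in>P) (p\<in>Q)) / 12 - (\<Prod>p\<in>S. w0 p (p\<in>P) (p\<in>Q)) / 4)"
  proof (intro sum.cong refl)
    fix P Q assume P: "P \<in> Pow S" and Q: "Q \<in> Pow S"
    have "D (\<Prod>P) (\<Prod>Q) + D (\<Prod>Q) (\<Prod>P)
       = (real (\<Prod>(P - Q)) ^ 2 + real (\<Prod>(Q - P)) ^ 2 + 1) / (12 * real (\<Prod>(P - Q)) * real (\<Prod>(Q - P))) - 1/4"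
      unfolding D_def using P Q by (intro pair_value[OF n0]) (auto simp: S_def)
    then show "(-1) ^ card P * ((-1) ^ card Q * (D (\<Prod>P) (\<Prod>Q) + D (\<Prod>Q) (\<Prod>P))) =
       (\<Prod>p\<in>S. w1 p (p\<in>P) (p\<in>Q)) / 12 + (\<Prod>p\<in>S. w2 p (p\<in>P) (p\<in>Q)) / 12
     + (\<Prod>p\<in>S. w3 p (p\<in>P) (p\<in>Q)) / 12 - (\<Prod>p\<in>S. w0 p (p\<in>P) (p\<in>Q)) / 4"
      unfolding w1_def w2_def w3_def w0_def using term_prod[OF finS _ _ Spos, of P Q] P Q by simp
  qed
  also have "\<dots> = (\<Sum>P\<in>Pow S. \<Sum>Q\<in>Pow S. \<Prod>p\<in>S. w1 p (p\<in>P) (p\<in>Q)) / 12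
      + (\<Sum>P\<in>Pow S. \<Sum>Q\<in>Pow S. \<Prod>p\<in>S. w2 p (p\<in>P) (p\<in>Q)) / 12
      + (\<Sum>P\<in>Pow S. \<Sum>Q\<in>Pow S. \<Prod>p\<in>S. w3 p (p\<in>P) (p\<in>Q)) / 12
      - (\<Sum>P\<in>Pow S. \<Sum>Q\<in>Pow S. \<Prod>p\<in>S. w0 p (p\<in>P) (p\<in>Q)) / 4"
    by (simp add: sum.distrib sum_subtractf sum_divide_distrib)
  also have "\<dots> = (\<Prod>p\<in>S. 2 - real p - 1 / real p) / 12 + (\<Prod>p\<in>S. 2 - real p - 1 / real p) / 12
      + (\<Prod>p\<in>S. 2 - 2 / real p) / 12 - (\<Prod>p\<in>S. (0::real)) / 4"
  proof -
    have e1: "w1 p True True + w1 p True False + w1 p False True + w1 p False False = 2 - real p - 1 / real p" for p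
      by (simp add: w1_def sg_def fx_def)
    have e2: "w2 p True True + w2 p True False + w2 p False True + w2 p False False = 2 - real p - 1 / real p" for p
      by (simp add: w2_def sg_def fx_def)
    have e3: "w3 p True True + w3 p True False + w3 p False True + w3 p False False = 2 - 2 / real p" for p
      by (simp add: w3_def sg_def fx_def)
    have e0: "w0 p True True + w0 p True False + w0 p False True + w0 p False False = 0" for p
      by (simp add: w0_def sg_def)
    show ?thesis unfolding pow_prod_bool2[OF finS] e1 e2 e3 e0 ..
  qed
  also have "(\<Prod>p\<in>S. (0::real)) = 0" using finS Sne by (simp add: card_gt_0_iff)
  finally have L2v: "2 * L = (\<Prod>p\<in>S. 2 - real p - 1 / real p) / 6 + (\<Prod>p\<in>S. 2 - 2 / real p) / 12"
    by simp
  define E where "E = (\<Prod>p\<in>S. 1 - 1 / real p)"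
  define T where "T = (\<Prod>p\<in>S. real p - 1)"
  have c1: "(\<Prod>p\<in>S. 2 - real p - 1 / real p) = E * ((-1) ^ card S * T)"
  proof -
    have "(\<Prod>p\<in>S. 2 - real p - 1 / real p) = (\<Prod>p\<in>S. (1 - 1 / real p) * ((-1) * (real p - 1)))"
      using Spos by (intro prod.cong refl) (simp add: field_simps)
    also have "\<dots> = E * ((-1) ^ card S * T)"
      unfolding E_def T_def by (simp only: prod.distrib prod_constant)
    finally show ?thesis .
  qed
  have c3: "(\<Prod>p\<in>S. 2 - 2 / real p) = 2 ^ card S * E"
  proof -
    have "(\<Prod>p\<in>S. 2 - 2 / real p) = (\<Prod>p\<in>S. 2 * (1 - 1 / real p))"
      by (intro prod.cong refl) (simp add: field_simps)
    also have "\<dots> = 2 ^ card S * E" unfolding E_def by (simp only: prod.distrib prod_constant)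
    finally show ?thesis .
  qed
  have pfm: "prime_factors m = S" unfolding m_def S_def[symmetric] using finS Sprime by (rule pf_prod)
  have om: "omega m = card S" "omega n = card S" unfolding omega_def pfm S_def by simp_all
  have tn: "real (totient n) = real n * E" unfolding E_def S_def by (rule totient_formula2)
  have tm: "real (totient m) = T"
  proof -
    have "real (totient m) = real m * (\<Prod>p\<in>S. 1 - 1 / real p)" using totient_formula2[of m] pfm by simp
    also have "\<dots> = (\<Prod>p\<in>S. real p * (1 - 1 / real p))"
      unfolding m_def S_def[symmetric] by (simp add: prod.distrib)
    also have "\<dots> = T" unfolding T_def using Spos by (intro prod.cong refl) (simp add: field_simps)
    finally show ?thesis .
  qed
  have h: "L * 24 = E * 2 ^ card S + E * (T * (2 * (- 1) ^ card S))"
    using L2v unfolding c1 c3 by (simp add: field_simps)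
  have h2: "real n * (L * 24) = real n * (E * 2 ^ card S + E * (T * (2 * (- 1) ^ card S)))"
    using h by simp
  show ?thesis
    unfolding L_def[symmetric] om tn tm
    using h2 by (simp add: algebra_simps)
qed


end
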